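(* Let $\mathcal{V}$ be a finite set of nodes, $\mathcal{P}$ a finite set of labels, $\mathcal{E}$ a set of unordered pairs of nodes, and $\theta_{ip},\theta_{ij,pq}\in\mathbb{R}$ unary and pairwise potential values. For $\vec{y}\in\{0,1\}^{\mathcal{V}\times\mathcal{P}}$ and $\vec{\lambda}\in\mathbb{R}^{\mathcal{V}}$ let $$L(\vec{y},\vec{\lambda})=\sum_{i\in\mathcal{V}}\sum_{p\in\mathcal{P}}\theta_{ip}y_{ip}+\sum_{\{i,j\}\in\mathcal{E}}\sum_{p,q\in\mathcal{P}}\theta_{ij,pq}y_{ip}y_{jq}+\sum_{i\in\mathcal{V}}\lambda_i\Big(\sum_{p\in\mathcal{P}}y_{ip}-1\Big)$$ and $D(\vec{\lambda})=\min_{\vec{y}\in\{0,1\}^{\mathcal{V}\times\mathcal{P}}}L(\vec{y},\vec{\lambda})$. If $\vec{\lambda}^*$ is a maximum point of $D$ over $\mathbb{R}^{\mathcal{V}}$, then $\vec{\lambda}^*$ satisfies the weak agreement condition.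
   Context: For $\vec\lambda\in\mathbb{R}^{\mathcal V}$, $i\in\mathcal V$, $p\in\mathcal P$, define $Z_{ip}(\vec\lambda)=\{z\in\{0,1\}:\ \exists\,\vec y^{\vec\lambda}\in\operatorname{Argmin}_{\vec y\in\{0,1\}^{\mathcal V\times\mathcal P}}L(\vec y,\vec\lambda)\text{ with }y^{\vec\lambda}_{ip}=z\}$, i.e. the set of values the variable $y_{ip}$ takes among all minimizers of the Lagrangian. A point $\vec\lambda$ satisfies the weak agreement condition if for every node $i\in\mathcal V$: (1) there exists $p\in\mathcal P$ with $1\in Z_{ip}(\vec\lambda)$; and (2) for every $p\in\mathcal P$, if $Z_{ip}(\vec\lambda)=\{1\}$ then $0\in Z_{iq}(\vec\lambda)$ for all $q\ne p$. *)

theory Defs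
  imports Complex_Main
begin

text \<open>Binary labelings y in {0,1}^(V x P), represented as real-valued functions that
  are 0/1 on V x P and 0 outside (so the feasible set is in bijection with {0,1}^(V x P)).\<close>
definition Ybin :: "'v set \<Rightarrow> 'p set \<Rightarrow> ('v \<Rightarrow> 'p \<Rightarrow> real) set" where
  "Ybin V P = {y. \<forall>i p. (i \<in> V \<and> p \<in> P \<longrightarrow> y i p \<in> {0, 1})
                        \<and> (\<not> (i \<in> V \<and> p \<in> P) \<longrightarrow> y i p = 0)}"

text \<open>Lagrangian. Each unordered edge {i,j} is stored once as an ordered pair (i,j) in E.\<close>
definition Lagr :: "'v set \<Rightarrow> 'p set \<Rightarrow> ('v \<times> 'v) set \<Rightarrow> ('v \<Rightarrow> 'p \<Rightarrow> real)
      \<Rightarrow> ('v \<Rightarrow> 'v \<Rightarrow> 'p \<Rightarrow> 'p \<Rightarrow> real) \<Rightarrow> ('v \<Rightarrow> 'p \<Rightarrow> real) \<Rightarrow> ('v \<Rightarrow> real) \<Rightarrow> real" where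
  "Lagr V P E th1 th2 y lam =
     (\<Sum>i\<in>V. \<Sum>p\<in>P. th1 i p * y i p)
   + (\<Sum>(i, j)\<in>E. \<Sum>p\<in>P. \<Sum>q\<in>P. th2 i j p q * y i p * y j q)
   + (\<Sum>i\<in>V. lam i * ((\<Sum>p\<in>P. y i p) - 1))"

definition Dual :: "'v set \<Rightarrow> 'p set \<Rightarrow> ('v \<times> 'v) set \<Rightarrow> ('v \<Rightarrow> 'p \<Rightarrow> real)
      \<Rightarrow> ('v \<Rightarrow> 'v \<Rightarrow> 'p \<Rightarrow> 'p \<Rightarrow> real) \<Rightarrow> ('v \<Rightarrow> real) \<Rightarrow> real" where
  "Dual V P E th1 th2 lam = Min ((\<lambda>y. Lagr V P E th1 th2 y lam) ` Ybin V P)"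

definition ArgminL :: "'v set \<Rightarrow> 'p set \<Rightarrow> ('v \<times> 'v) set \<Rightarrow> ('v \<Rightarrow> 'p \<Rightarrow> real)
      \<Rightarrow> ('v \<Rightarrow> 'v \<Rightarrow> 'p \<Rightarrow> 'p \<Rightarrow> real) \<Rightarrow> ('v \<Rightarrow> real) \<Rightarrow> ('v \<Rightarrow> 'p \<Rightarrow> real) set" where
  "ArgminL V P E th1 th2 lam =
     {y \<in> Ybin V P. \<forall>y' \<in> Ybin V P. Lagr V P E th1 th2 y lam \<le> Lagr V P E th1 th2 y' lam}"

definition Zset :: "'v set \<Rightarrow> 'p set \<Rightarrow> ('v \<times> 'v) set \<Rightarrow> ('v \<Rightarrow> 'p \<Rightarrow> real)
      \<Rightarrow> ('v \<Rightarrow> 'v \<Rightarrow> 'p \<Rightarrow> 'p \<Rightarrow> real) \<Rightarrow> ('v \<Rightarrow> real) \<Rightarrow> 'v \<Rightarrow> 'p \<Rightarrow> real set" where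
  "Zset V P E th1 th2 lam i p =
     {z \<in> {0, 1}. \<exists>y \<in> ArgminL V P E th1 th2 lam. y i p = z}"

definition weak_agreement :: "'v set \<Rightarrow> 'p set \<Rightarrow> ('v \<times> 'v) set \<Rightarrow> ('v \<Rightarrow> 'p \<Rightarrow> real)
      \<Rightarrow> ('v \<Rightarrow> 'v \<Rightarrow> 'p \<Rightarrow> 'p \<Rightarrow> real) \<Rightarrow> ('v \<Rightarrow> real) \<Rightarrow> bool" where
  "weak_agreement V P E th1 th2 lam \<longleftrightarrow>
     (\<forall>i \<in> V.
        (\<exists>p \<in> P. 1 \<in> Zset V P E th1 th2 lam i p)
      \<and> (\<forall>p \<in> P. Zset V P E th1 th2 lam i p = {1} \<longrightarrow>
            (\<forall>q \<in> P. q \<noteq> p \<longrightarrow> 0 \<in> Zset V P E th1 th2 lam i q)))"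

end

theory Submission
  imports Defs "HOL-Library.FuncSet"
begin

lemma finite_Ybin: assumes "finite V" "finite P" shows "finite (Ybin V P)"
proof -
  have "Ybin V P \<subseteq> (\<lambda>f i p. if i \<in> V \<and> p \<in> P then f (i,p) else 0) ` ((V\<times>P) \<rightarrow>\<^sub>E {0,1::real})"
  proof
    fix y assume y: "y \<in> Ybin V P"
    let ?f = "restrict (\<lambda>(i,p). y i p) (V\<times>P)"
    have "?f \<in> (V\<times>P) \<rightarrow>\<^sub>E {0,1}" using y by (auto simp: Ybin_def)
    moreover have "y = (\<lambda>i p. if i\<in>V \<and> p\<in>P then ?f (i,p) else 0)"
      using y by (auto simp: Ybin_def fun_eq_iff)
    ultimately show "y \<in> (\<lambda>f i p. if i \<in> V \<and> p \<in> P then f (i,p) else 0) ` ((V\<times>P) \<rightarrow>\<^sub>E {0,1::real})"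
      by blast
  qed
  then show ?thesis by (rule finite_subset) (intro finite_imageI finite_PiE, auto simp: assms)
qed

lemma Lagr_shift:
  assumes "finite V" "i \<in> V"
  shows "Lagr V P E th1 th2 y (lam(i := lam i + t)) = Lagr V P E th1 th2 y lam + t * ((\<Sum>p\<in>P. y i p) - 1)"
proof -
  have "(\<Sum>k\<in>V. (lam(i := lam i + t)) k * ((\<Sum>p\<in>P. y k p) - 1))
     = (\<Sum>k\<in>V. lam k * ((\<Sum>p\<in>P. y k p) - 1) + (if k = i then t * ((\<Sum>p\<in>P. y k p) - 1) else 0))"
    by (rule sum.cong) (auto simp: algebra_simps)
  also have "\<dots> = (\<Sum>k\<in>V. lam k * ((\<Sum>p\<in>P. y k p) - 1)) + t * ((\<Sum>p\<in>P. y i p) - 1)"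
    using assms by (simp add: sum.distrib)
  finally show ?thesis by (simp add: Lagr_def)
qed

theorem theorem2:
  fixes V :: "'v set" and P :: "'p set" and E :: "('v \<times> 'v) set"
    and th1 :: "'v \<Rightarrow> 'p \<Rightarrow> real" and th2 :: "'v \<Rightarrow> 'v \<Rightarrow> 'p \<Rightarrow> 'p \<Rightarrow> real"
    and lamstar :: "'v \<Rightarrow> real"
  assumes "finite V" and "finite P"
    and "E \<subseteq> V \<times> V"
    and "\<And>i j. (i, j) \<in> E \<Longrightarrow> i \<noteq> j \<and> (j, i) \<notin> E"
    and "\<And>lam. Dual V P E th1 th2 lam \<le> Dual V P E th1 th2 lamstar"
  shows "weak_agreement V P E th1 th2 lamstar"
proof -
  define L where "L y lam = Lagr V P E th1 th2 y lam" for y lam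
  define Y where "Y = Ybin V P"
  define D where "D = Dual V P E th1 th2 lamstar"
  have finY: "finite Y" using finite_Ybin assms(1,2) Y_def by blast
  have zeroY: "(\<lambda>i p. 0) \<in> Y" by (simp add: Y_def Ybin_def)
  have DualMin: "Dual V P E th1 th2 lam = Min ((\<lambda>y. L y lam) ` Y)" for lam
    by (simp add: Dual_def L_def Y_def)
  have Dle: "D \<le> L y lamstar" if "y \<in> Y" for y
    unfolding D_def DualMin by (rule Min_le[OF finite_imageI[OF finY]]) (use that in auto)
  have Dex: "\<exists>y\<in>Y. L y lamstar = D"
  proof -
    have "D \<in> (\<lambda>y. L y lamstar) ` Y" unfolding D_def DualMin
      by (rule Min_in[OF finite_imageI[OF finY]]) (use zeroY in auto)
    then show ?thesis by auto
  qed
  have argmin: "y \<in> ArgminL V P E th1 th2 lamstar \<longleftrightarrow> y \<in> Y \<and> L y lamstar = D" for y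
  proof
    assume a: "y \<in> ArgminL V P E th1 th2 lamstar"
    then have y: "y \<in> Y" "\<forall>y'\<in>Y. L y lamstar \<le> L y' lamstar"
      by (auto simp: ArgminL_def L_def Y_def)
    from Dex obtain y0 where "y0 \<in> Y" "L y0 lamstar = D" by blast
    with y Dle show "y \<in> Y \<and> L y lamstar = D" by force
  next
    assume "y \<in> Y \<and> L y lamstar = D"
    then show "y \<in> ArgminL V P E th1 th2 lamstar" using Dle
      by (auto simp: ArgminL_def L_def Y_def)
  qed
  obtain \<delta> where \<delta>: "\<delta> > 0" "\<forall>y\<in>Y. L y lamstar > D \<longrightarrow> L y lamstar \<ge> D + \<delta>"
  proof -
    let ?S = "insert 1 ((\<lambda>y. L y lamstar - D) ` {y\<in>Y. L y lamstar > D})"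
    have fS: "finite ?S" using finY by auto
    have "Min ?S > 0" using fS by (subst Min_gr_iff) auto
    moreover have "\<forall>y\<in>Y. L y lamstar > D \<longrightarrow> Min ?S \<le> L y lamstar - D"
      using fS by (auto intro!: Min_le)
    ultimately show thesis using that[of "Min ?S"] by force
  qed
  have bound: "\<bar>(\<Sum>p\<in>P. y i p) - 1\<bar> \<le> real (card P) + 1" if "y \<in> Y" "i \<in> V" for y i
  proof -
    have v: "p \<in> P \<Longrightarrow> y i p \<in> {0,1}" for p using that by (simp add: Y_def Ybin_def)
    have "0 \<le> (\<Sum>p\<in>P. y i p)" using v by (intro sum_nonneg) force
    moreover have "(\<Sum>p\<in>P. y i p) \<le> of_nat (card P) * 1"
      using v by (intro sum_bounded_above) force
    ultimately show ?thesis by auto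
  qed
  have key: False if d: "d = 1 \<or> d = -1" and i: "i \<in> V"
    and H: "\<forall>y\<in>Y. L y lamstar = D \<longrightarrow> d * ((\<Sum>p\<in>P. y i p) - 1) \<ge> 1" for d i
  proof -
    define M where "M = real (card P) + 1"
    have M: "M > 0" by (simp add: M_def)
    define \<epsilon> where "\<epsilon> = min 1 (\<delta> / (2*M))"
    have \<epsilon>: "\<epsilon> > 0" using M \<delta> by (simp add: \<epsilon>_def)
    have \<epsilon>M: "\<epsilon> * M \<le> \<delta> / 2"
    proof -
      have "\<epsilon> * M \<le> (\<delta> / (2*M)) * M" using M by (intro mult_right_mono) (auto simp: \<epsilon>_def)
      also have "\<dots> = \<delta>/2" using M by simp
      finally show ?thesis .
    qed
    define lam' where "lam' = lamstar(i := lamstar i + \<epsilon>*d)"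
    have gt: "L y lam' > D" if y: "y \<in> Y" for y
    proof -
      define s where "s = (\<Sum>p\<in>P. y i p)"
      have eq: "L y lam' = L y lamstar + \<epsilon> * (d * (s - 1))"
        unfolding L_def lam'_def s_def Lagr_shift[OF assms(1) i] by (simp add: algebra_simps)
      show ?thesis
      proof (cases "L y lamstar = D")
        case True
        then have "d * (s - 1) \<ge> 1" using H y s_def by auto
        then have "\<epsilon> * (d * (s - 1)) \<ge> \<epsilon> * 1" using \<epsilon> by (intro mult_left_mono) auto
        then show ?thesis using eq True \<epsilon> by auto
      next
        case False
        then have "L y lamstar > D" using Dle[OF y] by auto
        then have ge: "L y lamstar \<ge> D + \<delta>" using \<delta> y by auto
        have "\<bar>d * (s - 1)\<bar> \<le> M" using bound[OF y i] d by (auto simp: M_def s_def abs_mult)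
        then have "\<bar>\<epsilon> * (d * (s - 1))\<bar> \<le> \<epsilon> * M" using \<epsilon>
          by (simp add: abs_mult mult_left_mono)
        then show ?thesis using eq ge \<epsilon>M \<delta> by auto
      qed
    qed
    have "Dual V P E th1 th2 lam' \<in> (\<lambda>y. L y lam') ` Y" unfolding DualMin
      by (rule Min_in[OF finite_imageI[OF finY]]) (use zeroY in auto)
    then have "Dual V P E th1 th2 lam' > D" using gt by auto
    then show False using assms(5)[of lam'] D_def by auto
  qed
  have vals: "y i p \<in> {0,1}" if "y \<in> Y" "i \<in> V" "p \<in> P" for y i p
    using that by (simp add: Y_def Ybin_def)
  show ?thesis unfolding weak_agreement_def
  proof (intro ballI conjI impI)
    fix i assume i: "i \<in> V"
    show "\<exists>p\<in>P. 1 \<in> Zset V P E th1 th2 lamstar i p"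
    proof (rule ccontr)
      assume nz: "\<not> (\<exists>p\<in>P. 1 \<in> Zset V P E th1 th2 lamstar i p)"
      have "\<forall>y\<in>Y. L y lamstar = D \<longrightarrow> (-1) * ((\<Sum>p\<in>P. y i p) - 1) \<ge> 1"
      proof (intro ballI impI)
        fix y assume y: "y \<in> Y" "L y lamstar = D"
        then have am: "y \<in> ArgminL V P E th1 th2 lamstar" using argmin by simp
        have "\<forall>p\<in>P. y i p = 0"
        proof
          fix p assume p: "p \<in> P"
          have "y i p \<in> {0,1}" using vals y(1) i p by blast
          moreover have "y i p \<noteq> 1" using nz am p unfolding Zset_def by auto
          ultimately show "y i p = 0" by auto
        qed
        then have "(\<Sum>p\<in>P. y i p) = 0" by simp
        then show "(-1) * ((\<Sum>p\<in>P. y i p) - 1) \<ge> 1" by simp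
      qed
      then show False using key[of "-1" i] i by auto
    qed
  next
    fix i p q assume i: "i \<in> V" and p: "p \<in> P" and Zp: "Zset V P E th1 th2 lamstar i p = {1}"
      and q: "q \<in> P" and qp: "q \<noteq> p"
    show "0 \<in> Zset V P E th1 th2 lamstar i q"
    proof (rule ccontr)
      assume nz: "0 \<notin> Zset V P E th1 th2 lamstar i q"
      have "\<forall>y\<in>Y. L y lamstar = D \<longrightarrow> 1 * ((\<Sum>p\<in>P. y i p) - 1) \<ge> 1"
      proof (intro ballI impI)
        fix y assume y: "y \<in> Y" "L y lamstar = D"
        then have am: "y \<in> ArgminL V P E th1 th2 lamstar" using argmin by simp
        have "y i p \<in> Zset V P E th1 th2 lamstar i p"
          using vals[OF y(1) i p] am unfolding Zset_def by auto
        then have yp: "y i p = 1" using Zp by auto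
        have "y i q \<noteq> 0" using nz am vals[OF y(1) i q] unfolding Zset_def by auto
        then have yq: "y i q = 1" using vals[OF y(1) i q] by auto
        have "(\<Sum>k\<in>{p,q}. y i k) \<le> (\<Sum>k\<in>P. y i k)"
          using p q vals[OF y(1) i] assms(2) by (intro sum_mono2) force+
        moreover have "(\<Sum>k\<in>{p,q}. y i k) = 2" using qp yp yq by simp
        ultimately show "1 * ((\<Sum>p\<in>P. y i p) - 1) \<ge> 1" by simp
      qed
      then show False using key[of 1 i] i by auto
    qed
  qed
qed

end
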